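(* Let $\mathcal{G}\in\Gamma_N$ with eigenvalues $1,\lambda_2,\dots,\lambda_N$ of $\mathcal{D}$ ($|\lambda_i|<1$ for $i\ge2$), and let $h_1,\dots,h_N\in\mathbf{R}^n$ be a formation. If $A+BK$ and $A+(1-\lambda_i)LC$, $i=2,\dots,N$, are Schur stable and $(A-I)(h_i-h_j)=0$ for all $i,j$, then under the formation protocol, for every initial condition, $\|x_i(k)-h_i-x_j(k)+h_j\|\to0$ as $k\to\infty$ for all $i,j=1,\dots,N$.
   Context: Agents: $x_i(k+1)=Ax_i(k)+Bu_i(k)$, $y_i=Cx_i$, $i=1,\dots,N$, with $A\in\mathbf{R}^{n\times n}$, $B\in\mathbf{R}^{n\times p}$, $C\in\mathbf{R}^{q\times n}$. For a directed graph $\mathcal{G}$ on $\{1,\dots,N\}$, its row-stochastic matrix $\mathcal{D}=(d_{ij})$ has $d_{ii}>0$, $d_{ij}>0$ ($j\ne i$) iff $(j,i)$ is an edge, $0$ otherwise, row sums $1$; $\Gamma_N$ is the set of such graphs containing a directed spanning tree. Formation protocol with $K\in\mathbf{R}^{p\times n}$, $L\in\mathbf{R}^{n\times q}$: $\tilde\zeta_i=\sum_jd_{ij}\big(y_i-y_j-C(h_i-h_j)\big)$, $v_i(k+1)=(A+BK)v_i+L\big(\sum_jd_{ij}C(v_i-v_j)-\tilde\zeta_i\big)$, $u_i=Kv_i$, $v_i\in\mathbf{R}^n$. Schur stable: all eigenvalues of modulus $<1$. *)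

theory Defs
  imports Complex_Main "Jordan_Normal_Form.Matrix" "Jordan_Normal_Form.Char_Poly"
begin

text \<open>Agents and graph vertices are indexed by 0..<N.\<close>

definition cmat :: "real mat \<Rightarrow> complex mat" where
  "cmat M = map_mat complex_of_real M"

definition schur_stable :: "complex mat \<Rightarrow> bool" where
  "schur_stable M \<longleftrightarrow> (\<forall>\<mu>. eigenvalue M \<mu> \<longrightarrow> cmod \<mu> < 1)"

text \<open>A directed graph on vertices 0..<N given by its edge set; (j,i) is the edge from j to i.\<close>
definition is_digraph :: "nat \<Rightarrow> (nat \<times> nat) set \<Rightarrow> bool" where
  "is_digraph N E \<longleftrightarrow> E \<subseteq> {(j,i). j < N \<and> i < N \<and> j \<noteq> i}"

definition has_spanning_tree :: "nat \<Rightarrow> (nat \<times> nat) set \<Rightarrow> bool" where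
  "has_spanning_tree N E \<longleftrightarrow> (\<exists>r<N. \<forall>i<N. (r, i) \<in> E\<^sup>*)"

definition in_Gamma :: "nat \<Rightarrow> (nat \<times> nat) set \<Rightarrow> bool" where
  "in_Gamma N E \<longleftrightarrow> is_digraph N E \<and> has_spanning_tree N E"

definition row_stochastic_of :: "nat \<Rightarrow> (nat \<times> nat) set \<Rightarrow> real mat \<Rightarrow> bool" where
  "row_stochastic_of N E D \<longleftrightarrow>
     D \<in> carrier_mat N N \<and>
     (\<forall>i<N. D $$ (i,i) > 0) \<and>
     (\<forall>i<N. \<forall>j<N. j \<noteq> i \<longrightarrow>
        (if (j,i) \<in> E then D $$ (i,j) > 0 else D $$ (i,j) = 0)) \<and>
     (\<forall>i<N. (\<Sum>j<N. D $$ (i,j)) = 1)"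

definition vnorm :: "real vec \<Rightarrow> real" where
  "vnorm w = sqrt (\<Sum>r<dim_vec w. (w $ r)\<^sup>2)"

end

theory Submission
  imports Defs "Jordan_Normal_Form.Spectral_Radius" "Jordan_Normal_Form.Schur_Decomposition"
begin

lemma conv_null:
  fixes a :: "nat \<Rightarrow> real" and r :: real
  assumes a0: "\<And>t. a t \<ge> 0" and lim: "a \<longlonglongrightarrow> 0" and r0: "0 \<le> r" and r1: "r < 1"
  shows "(\<lambda>k. \<Sum>t<k. r^(k-1-t) * a t) \<longlonglongrightarrow> 0"
proof -
  define s where "s k = (\<Sum>t<k. r^(k-1-t) * a t)" for k
  have rec: "s (Suc k) = r * s k + a k" for k
  proof -
    have "s (Suc k) = (\<Sum>t<k. r^(k-t) * a t) + a k" unfolding s_def by simp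
    also have "(\<Sum>t<k. r^(k-t) * a t) = (\<Sum>t<k. r * (r^(k-1-t) * a t))"
    proof (rule sum.cong)
      fix t assume "t \<in> {..<k}"
      then have "k - t = Suc (k-1-t)" by auto
      then show "r^(k-t) * a t = r * (r^(k-1-t) * a t)" by simp
    qed simp
    finally show ?thesis unfolding s_def by (simp add: sum_distrib_left)
  qed
  have s0: "s k \<ge> 0" for k unfolding s_def by (intro sum_nonneg mult_nonneg_nonneg zero_le_power r0 a0)
  show ?thesis unfolding s_def[symmetric]
  proof (rule LIMSEQ_I)
    fix e :: real assume e: "0 < e"
    have "0 < e * (1 - r) / 2" using e r1 by simp
    from order_tendstoD(2)[OF lim this] obtain K where K: "\<And>k. k \<ge> K \<Longrightarrow> a k < e * (1 - r) / 2"
      unfolding eventually_sequentially by auto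
    have bound: "s (K + j) \<le> r^j * s K + e / 2" for j
    proof (induction j)
      case 0 thus ?case using e by simp
    next
      case (Suc j)
      have "s (K + Suc j) = r * s (K + j) + a (K + j)" using rec by simp
      also have "\<dots> \<le> r * (r^j * s K + e/2) + e * (1 - r) / 2"
        using Suc K[of "K+j"] r0 by (intro add_mono mult_left_mono) auto
      also have "\<dots> = r^Suc j * s K + e/2" by (simp add: field_simps)
      finally show ?case .
    qed
    have "(\<lambda>j. r^j * s K) \<longlonglongrightarrow> 0"
      using tendsto_mult_left_zero[OF LIMSEQ_power_zero[of r], of "s K"] r0 r1 by auto
    from order_tendstoD(2)[OF this, of "e/2"] e obtain J where J: "\<And>j. j \<ge> J \<Longrightarrow> r^j * s K < e/2"
      unfolding eventually_sequentially by auto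
    show "\<exists>no. \<forall>k\<ge>no. norm (s k - 0) < e"
    proof (intro exI allI impI)
      fix k assume k: "k \<ge> K + J"
      define j where "j = k - K"
      have kj: "k = K + j" and "j \<ge> J" using k unfolding j_def by auto
      with bound[of j] J[of j] s0[of k] show "norm (s k - 0) < e" by auto
    qed
  qed
qed

lemma mv_entry:
  assumes A: "A \<in> carrier_mat m n" and w: "w \<in> carrier_vec n" and a: "a < m"
  shows "(A *\<^sub>v w) $ a = (\<Sum>b<n. A $$ (a,b) * w $ b)"
  using A w a by (auto simp: scalar_prod_def lessThan_atLeast0)

lemma pow_smult:
  assumes A: "(A :: 'a :: comm_ring_1 mat) \<in> carrier_mat n n"
  shows "(a \<cdot>\<^sub>m A) ^\<^sub>m k = a^k \<cdot>\<^sub>m (A ^\<^sub>m k)"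
proof (induction k)
  case 0 show ?case using A by (intro eq_matI) auto
next
  case (Suc k)
  have c: "A ^\<^sub>m k \<in> carrier_mat n n" using A by auto
  have "(a \<cdot>\<^sub>m A) ^\<^sub>m Suc k = (a^k \<cdot>\<^sub>m (A ^\<^sub>m k)) * (a \<cdot>\<^sub>m A)" using Suc by simp
  also have "\<dots> = a^k \<cdot>\<^sub>m (a \<cdot>\<^sub>m (A ^\<^sub>m k * A))"
    using mult_smult_assoc_mat[OF c smult_carrier_mat[OF A], of "a^k"] mult_smult_distrib[OF c A, of a] by simp
  also have "\<dots> = a^Suc k \<cdot>\<^sub>m (A ^\<^sub>m Suc k)" using A by (intro eq_matI) (auto simp: ac_simps)
  finally show ?case .
qed

lemma pow_comm:
  assumes A: "(A :: 'a :: semiring_1 mat) \<in> carrier_mat n n"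
  shows "A * A ^\<^sub>m k = A ^\<^sub>m k * A"
proof (induction k)
  case 0 show ?case using A by simp
next
  case (Suc k)
  have c: "A ^\<^sub>m k \<in> carrier_mat n n" using A by auto
  have "A * A ^\<^sub>m Suc k = (A * A ^\<^sub>m k) * A" using assoc_mult_mat[OF A c A] by simp
  also have "\<dots> = A ^\<^sub>m Suc k * A" using Suc by simp
  finally show ?case .
qed

lemma pow_decay:
  fixes M :: "complex mat"
  assumes M: "M \<in> carrier_mat n n" and st: "\<And>\<mu>. eigenvalue M \<mu> \<Longrightarrow> cmod \<mu> < 1"
  shows "\<exists>c r. 0 \<le> c \<and> 0 < r \<and> r < 1 \<and>
     (\<forall>k i j. i < n \<longrightarrow> j < n \<longrightarrow> cmod ((M ^\<^sub>m k) $$ (i,j)) \<le> c * r^k)"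
proof (cases "n = 0")
  case True thus ?thesis by (intro exI[of _ 0] exI[of _ "1/2"]) auto
next
  case False hence n: "n > 0" by auto
  define \<rho> where "\<rho> = spectral_radius M"
  from spectral_radius_mem_max(1)[OF M n] obtain \<mu> where "eigenvalue M \<mu>" "\<rho> = cmod \<mu>"
    unfolding spectrum_def \<rho>_def by auto
  hence \<rho>0: "0 \<le> \<rho>" and \<rho>1: "\<rho> < 1" using st by auto
  define r where "r = (1 + \<rho>)/2"
  have r0: "0 < r" "r < 1" "\<rho> < r" using \<rho>0 \<rho>1 by (auto simp: r_def)
  define M' where "M' = complex_of_real (1/r) \<cdot>\<^sub>m M"
  have M': "M' \<in> carrier_mat n n" using M by (auto simp: M'_def)
  have "spectral_radius M' < 1"
  proof -
    from spectral_radius_mem_max(1)[OF M' n] obtain \<mu>' where ev': "eigenvalue M' \<mu>'"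
      and eq: "spectral_radius M' = cmod \<mu>'" unfolding spectrum_def by auto
    from ev' obtain v where v: "eigenvector M' v \<mu>'" unfolding eigenvalue_def by auto
    hence vc: "v \<in> carrier_vec n" "v \<noteq> 0\<^sub>v n" and ev: "M' *\<^sub>v v = \<mu>' \<cdot>\<^sub>v v"
      using M' unfolding eigenvector_def by auto
    have "M *\<^sub>v v = (of_real r * \<mu>') \<cdot>\<^sub>v v"
    proof (rule eq_vecI)
      fix i assume i: "i < dim_vec ((of_real r * \<mu>') \<cdot>\<^sub>v v)"
      hence i: "i < n" using vc by auto
      have "(M' *\<^sub>v v) $ i = \<mu>' * v $ i" using ev i vc by (metis index_smult_vec(1) carrier_vecD)
      moreover have "(M' *\<^sub>v v) $ i = (1/of_real r) * (M *\<^sub>v v) $ i" using i M vc M'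
        by (simp add: mv_entry M'_def sum_distrib_left mult.assoc)
      ultimately show "(M *\<^sub>v v) $ i = ((of_real r * \<mu>') \<cdot>\<^sub>v v) $ i" using i vc r0
        by (auto simp: field_simps)
    qed (use M vc in auto)
    hence "eigenvalue M (of_real r * \<mu>')" using vc M unfolding eigenvalue_def eigenvector_def by auto
    hence "cmod (of_real r * \<mu>') \<le> \<rho>" unfolding \<rho>_def
      by (intro spectral_radius_mem_max(2)[OF M n]) (auto simp: spectrum_def)
    hence "r * cmod \<mu>' \<le> \<rho>" using r0 by (simp add: norm_mult)
    hence "cmod \<mu>' \<le> \<rho> / r" using r0 by (simp add: field_simps)
    also have "\<rho> / r < 1" using r0 by simp
    finally show ?thesis using eq by simp
  qed
  from spectral_radius_jnf_norm_bound_less_1_upper_triangular[OF M' this]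
  obtain c where c: "\<And>k. norm_bound (M' ^\<^sub>m k) c" by auto
  have pw: "M' ^\<^sub>m k = (complex_of_real (1/r))^k \<cdot>\<^sub>m M ^\<^sub>m k" for k
    unfolding M'_def by (rule pow_smult[OF M])
  show ?thesis
  proof (intro exI conjI allI impI)
    from c[of 0] have "\<forall>i j. i < n \<longrightarrow> j < n \<longrightarrow> cmod ((M' ^\<^sub>m 0) $$ (i,j)) \<le> c"
      using M' unfolding norm_bound_def by simp
    hence "cmod ((M' ^\<^sub>m 0) $$ (0,0)) \<le> c" using n by blast
    thus "0 \<le> c" by (metis norm_ge_zero order_trans)
    show "0 < r" "r < 1" using r0 by auto
    fix k i j assume ij: "i < n" "j < n"
    have "cmod ((M' ^\<^sub>m k) $$ (i,j)) \<le> c" using c[of k] ij M' unfolding norm_bound_def by auto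
    moreover have "(M' ^\<^sub>m k) $$ (i,j) = (complex_of_real (1/r))^k * (M ^\<^sub>m k) $$ (i,j)"
      using pw ij M by simp
    ultimately have "(1/r)^k * cmod ((M ^\<^sub>m k) $$ (i,j)) \<le> c" using r0
      by (simp add: norm_mult norm_power norm_divide)
    hence "r^k * ((1/r)^k * cmod ((M ^\<^sub>m k) $$ (i,j))) \<le> r^k * c" using r0
      by (intro mult_left_mono) auto
    thus "cmod ((M ^\<^sub>m k) $$ (i,j)) \<le> c * r^k" using r0
      by (simp add: power_one_over field_simps)
  qed
qed

lemma iss:
  fixes M :: "complex mat" and z u :: "nat \<Rightarrow> complex vec"
  assumes M: "M \<in> carrier_mat n n" and st: "\<And>\<mu>. eigenvalue M \<mu> \<Longrightarrow> cmod \<mu> < 1"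
    and z: "\<And>k. z k \<in> carrier_vec n" and u: "\<And>k. u k \<in> carrier_vec n"
    and rec: "\<And>k. z (Suc k) = M *\<^sub>v z k + u k"
    and ul: "\<And>b. b < n \<Longrightarrow> (\<lambda>k. u k $ b) \<longlonglongrightarrow> 0"
    and b: "b < n"
  shows "(\<lambda>k. z k $ b) \<longlonglongrightarrow> 0"
proof -
  have Mp: "M ^\<^sub>m j \<in> carrier_mat n n" for j using M by auto
  have mvc: "M ^\<^sub>m j *\<^sub>v w \<in> carrier_vec n" if "w \<in> carrier_vec n" for j w
    using Mp[of j] that by (rule mult_mat_vec_carrier)
  have step: "M *\<^sub>v (M ^\<^sub>m j *\<^sub>v w) = M ^\<^sub>m (Suc j) *\<^sub>v w" if w: "w \<in> carrier_vec n" for j w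
  proof -
    have "M *\<^sub>v (M ^\<^sub>m j *\<^sub>v w) = (M * M ^\<^sub>m j) *\<^sub>v w" using assoc_mult_mat_vec[OF M Mp w] by simp
    also have "\<dots> = M ^\<^sub>m (Suc j) *\<^sub>v w" using pow_comm[OF M] by simp
    finally show ?thesis .
  qed
  have formula: "\<forall>a<n. z k $ a = (M ^\<^sub>m k *\<^sub>v z 0) $ a + (\<Sum>t<k. (M ^\<^sub>m (k-1-t) *\<^sub>v u t) $ a)" for k
  proof (induction k)
    case 0 show ?case using z[of 0] M by simp
  next
    case (Suc k)
    show ?case
    proof (intro allI impI)
      fix a assume a: "a < n"
      have "z (Suc k) $ a = (M *\<^sub>v z k) $ a + u k $ a" using rec[of k] a M z[of k] u[of k] by simp
      also have "(M *\<^sub>v z k) $ a = (\<Sum>b<n. M $$ (a,b) * z k $ b)" by (rule mv_entry[OF M z a])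
      also have "\<dots> = (\<Sum>b<n. M $$ (a,b) * ((M ^\<^sub>m k *\<^sub>v z 0) $ b + (\<Sum>t<k. (M ^\<^sub>m (k-1-t) *\<^sub>v u t) $ b)))"
        using Suc by (intro sum.cong) auto
      also have "\<dots> = (\<Sum>b<n. M $$ (a,b) * (M ^\<^sub>m k *\<^sub>v z 0) $ b)
          + (\<Sum>b<n. \<Sum>t<k. M $$ (a,b) * (M ^\<^sub>m (k-1-t) *\<^sub>v u t) $ b)"
        by (simp add: distrib_left sum.distrib sum_distrib_left)
      also have "(\<Sum>b<n. \<Sum>t<k. M $$ (a,b) * (M ^\<^sub>m (k-1-t) *\<^sub>v u t) $ b)
          = (\<Sum>t<k. (\<Sum>b<n. M $$ (a,b) * (M ^\<^sub>m (k-1-t) *\<^sub>v u t) $ b))"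
        by (rule sum.swap)
      also have "(\<Sum>b<n. M $$ (a,b) * (M ^\<^sub>m k *\<^sub>v z 0) $ b) = (M ^\<^sub>m (Suc k) *\<^sub>v z 0) $ a"
        using mv_entry[OF M _ a, of "M ^\<^sub>m k *\<^sub>v z 0"] step[OF z[of 0], of k] mvc[OF z[of 0], of k] by auto
      also have "(\<Sum>t<k. (\<Sum>b<n. M $$ (a,b) * (M ^\<^sub>m (k-1-t) *\<^sub>v u t) $ b))
          = (\<Sum>t<k. (M ^\<^sub>m (Suc k - 1 - t) *\<^sub>v u t) $ a)"
      proof (rule sum.cong)
        fix t assume t: "t \<in> {..<k}"
        have "(\<Sum>b<n. M $$ (a,b) * (M ^\<^sub>m (k-1-t) *\<^sub>v u t) $ b) = (M *\<^sub>v (M ^\<^sub>m (k-1-t) *\<^sub>v u t)) $ a"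
          using mv_entry[OF M _ a, of "M ^\<^sub>m (k-1-t) *\<^sub>v u t"] mvc[OF u[of t]] by auto
        also have "\<dots> = (M ^\<^sub>m (Suc (k-1-t)) *\<^sub>v u t) $ a" using step[OF u] by simp
        also have "Suc (k-1-t) = Suc k - 1 - t" using t by auto
        finally show "(\<Sum>b<n. M $$ (a,b) * (M ^\<^sub>m (k-1-t) *\<^sub>v u t) $ b) = (M ^\<^sub>m (Suc k - 1 - t) *\<^sub>v u t) $ a" .
      qed simp
      also have "u k $ a = (M ^\<^sub>m (Suc k - 1 - k) *\<^sub>v u k) $ a" using u[of k] a M by simp
      finally show "z (Suc k) $ a = (M ^\<^sub>m Suc k *\<^sub>v z 0) $ a + (\<Sum>t<Suc k. (M ^\<^sub>m (Suc k - 1 - t) *\<^sub>v u t) $ a)"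
        by (simp add: add.assoc)
    qed
  qed
  from pow_decay[OF M st] obtain c r where c0: "0 \<le> c" and r: "0 < r" "r < 1"
    and bd: "\<And>k i j. i < n \<Longrightarrow> j < n \<Longrightarrow> cmod ((M ^\<^sub>m k) $$ (i,j)) \<le> c * r^k" by blast
  define Z0 where "Z0 = (\<Sum>j<n. cmod (z 0 $ j))"
  define U where "U t = (\<Sum>j<n. cmod (u t $ j))" for t
  have U0: "U t \<ge> 0" for t unfolding U_def by (simp add: sum_nonneg)
  have Ul: "U \<longlonglongrightarrow> 0" unfolding U_def
    by (rule tendsto_null_sum) (use ul in \<open>auto intro: tendsto_norm_zero\<close>)
  have mvb: "cmod ((M ^\<^sub>m j *\<^sub>v w) $ b) \<le> c * r^j * (\<Sum>i<n. cmod (w $ i))" if w: "w \<in> carrier_vec n" for j w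
  proof -
    have "cmod ((M ^\<^sub>m j *\<^sub>v w) $ b) = cmod (\<Sum>i<n. (M ^\<^sub>m j) $$ (b,i) * w $ i)"
      using mv_entry[OF Mp w b] by simp
    also have "\<dots> \<le> (\<Sum>i<n. cmod ((M ^\<^sub>m j) $$ (b,i) * w $ i))" by (rule norm_sum)
    also have "\<dots> \<le> (\<Sum>i<n. c * r^j * cmod (w $ i))"
      using bd[OF b] by (intro sum_mono) (auto simp: norm_mult intro: mult_right_mono)
    finally show ?thesis by (simp add: sum_distrib_left)
  qed
  have bound: "cmod (z k $ b) \<le> c * r^k * Z0 + c * (\<Sum>t<k. r^(k-1-t) * U t)" for k
  proof -
    have "cmod (z k $ b) \<le> cmod ((M ^\<^sub>m k *\<^sub>v z 0) $ b) + (\<Sum>t<k. cmod ((M ^\<^sub>m (k-1-t) *\<^sub>v u t) $ b))"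
    proof -
      have "cmod (z k $ b) = cmod ((M ^\<^sub>m k *\<^sub>v z 0) $ b + (\<Sum>t<k. (M ^\<^sub>m (k-1-t) *\<^sub>v u t) $ b))"
        using formula[of k] b by simp
      also have "\<dots> \<le> cmod ((M ^\<^sub>m k *\<^sub>v z 0) $ b) + cmod (\<Sum>t<k. (M ^\<^sub>m (k-1-t) *\<^sub>v u t) $ b)"
        by (rule norm_triangle_ineq)
      also have "cmod (\<Sum>t<k. (M ^\<^sub>m (k-1-t) *\<^sub>v u t) $ b) \<le> (\<Sum>t<k. cmod ((M ^\<^sub>m (k-1-t) *\<^sub>v u t) $ b))"
        by (rule norm_sum)
      finally show ?thesis by simp
    qed
    also have "\<dots> \<le> c * r^k * Z0 + (\<Sum>t<k. c * r^(k-1-t) * U t)"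
      unfolding Z0_def U_def by (intro add_mono sum_mono mvb z u)
    finally show ?thesis by (simp add: sum_distrib_left mult.assoc)
  qed
  have "(\<lambda>k. c * r^k * Z0 + c * (\<Sum>t<k. r^(k-1-t) * U t)) \<longlonglongrightarrow> 0 + c * 0"
  proof (intro tendsto_add tendsto_mult_left)
    show "(\<lambda>k. c * r^k * Z0) \<longlonglongrightarrow> 0"
      using tendsto_mult_left[OF tendsto_mult_right[OF LIMSEQ_power_zero[of r], of Z0], of c] r by (simp add: mult.assoc)
    show "(\<lambda>k. \<Sum>t<k. r^(k-1-t) * U t) \<longlonglongrightarrow> 0" by (rule conv_null[OF U0 Ul]) (use r in auto)
  qed
  hence lim: "(\<lambda>k. c * r^k * Z0 + c * (\<Sum>t<k. r^(k-1-t) * U t)) \<longlonglongrightarrow> 0" by simp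
  show ?thesis
  proof (rule tendsto_0_le[OF lim, of _ 1], intro always_eventually allI)
    fix k show "cmod (z k $ b) \<le> norm (c * r^k * Z0 + c * (\<Sum>t<k. r^(k-1-t) * U t)) * 1"
      using order_trans[OF bound[of k] abs_ge_self] by simp
  qed
qed


lemma TiY:
  fixes Y :: "'a :: comm_ring_1 mat"
  assumes Y: "Y \<in> carrier_mat N N" and i: "i < N" and j: "j < N" and N: "0 < N"
  shows "(mat N N (\<lambda>(i,l). if i = 0 then (if l = 0 then 1 else 0) else (if l = i then 1 else 0) - (if l = 0 then 1 else 0)) * Y) $$ (i,j)
     = (if i = 0 then Y $$ (0,j) else Y $$ (i,j) - Y $$ (0,j))"
proof -
  let ?T = "mat N N (\<lambda>(i,l). if i = 0 then (if l = 0 then 1 else 0) else (if l = i then 1 else 0) - (if l = 0 then 1 else 0)) :: 'a mat"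
  have "(?T * Y) $$ (i,j) = (\<Sum>l<N. ?T $$ (i,l) * Y $$ (l,j))"
    using Y i j by (simp add: scalar_prod_def lessThan_atLeast0)
  also have "\<dots> = (\<Sum>l<N. (if i = 0 then (if l = 0 then Y $$ (l,j) else 0) else (if l = i then Y $$ (l,j) else 0) - (if l = 0 then Y $$ (l,j) else 0)))"
    using i by (intro sum.cong refl) auto
  also have "\<dots> = (if i = 0 then Y $$ (0,j) else Y $$ (i,j) - Y $$ (0,j))"
    using i N by (cases "i = 0") (simp_all add: sum_subtractf)
  finally show ?thesis .
qed

lemma YS:
  fixes Y :: "'a :: comm_ring_1 mat"
  assumes Y: "Y \<in> carrier_mat N N" and i: "i < N" and j: "j < N" and N: "0 < N"
  shows "(Y * mat N N (\<lambda>(l,j). if j = 0 then 1 else (if l = j then 1 else 0))) $$ (i,j)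
     = (if j = 0 then (\<Sum>l<N. Y $$ (i,l)) else Y $$ (i,j))"
proof -
  let ?S = "mat N N (\<lambda>(l,j). if j = 0 then 1 else (if l = j then 1 else 0)) :: 'a mat"
  have "(Y * ?S) $$ (i,j) = (\<Sum>l<N. Y $$ (i,l) * ?S $$ (l,j))"
    using Y i j by (simp add: scalar_prod_def lessThan_atLeast0)
  also have "\<dots> = (\<Sum>l<N. if j = 0 then Y $$ (i,l) else (if l = j then Y $$ (i,l) else 0))"
    using j by (intro sum.cong refl) auto
  also have "\<dots> = (if j = 0 then (\<Sum>l<N. Y $$ (i,l)) else Y $$ (i,j))"
    using j by (cases "j = 0") simp_all
  finally show ?thesis .
qed

lemma char_poly_reduce:
  fixes Dc :: "complex mat"
  assumes Dc: "Dc \<in> carrier_mat (Suc m) (Suc m)"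
    and rs: "\<And>i. i < Suc m \<Longrightarrow> (\<Sum>j<Suc m. Dc $$ (i,j)) = 1"
  shows "char_poly Dc = [:-1,1:] * char_poly (mat m m (\<lambda>(i,j). Dc $$ (Suc i, Suc j) - Dc $$ (0, Suc j)))"
proof -
  define N where "N = Suc m"
  have N: "0 < N" unfolding N_def by simp
  define S :: "complex mat" where "S = mat N N (\<lambda>(l,j). if j = 0 then 1 else (if l = j then 1 else 0))"
  define T :: "complex mat" where "T = mat N N (\<lambda>(i,l). if i = 0 then (if l = 0 then 1 else 0) else (if l = i then 1 else 0) - (if l = 0 then 1 else 0))"
  define G where "G = mat m m (\<lambda>(i,j). Dc $$ (Suc i, Suc j) - Dc $$ (0, Suc j))"
  define Cr :: "complex mat" where "Cr = mat 1 m (\<lambda>(i,j). Dc $$ (0, Suc j))"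
  have Dc': "Dc \<in> carrier_mat N N" using Dc N_def by simp
  have Sc: "S \<in> carrier_mat N N" and Tc: "T \<in> carrier_mat N N" unfolding S_def T_def by auto
  have TS: "T * S = 1\<^sub>m N"
  proof (rule eq_matI)
    fix i j assume ij: "i < dim_row (1\<^sub>m N)" "j < dim_col (1\<^sub>m N)"
    hence ij: "i < N" "j < N" by auto
    have e: "(T * S) $$ (i,j) = (if i = 0 then S $$ (0,j) else S $$ (i,j) - S $$ (0,j))"
      using TiY[OF Sc ij N] unfolding T_def .
    show "(T * S) $$ (i,j) = 1\<^sub>m N $$ (i,j)"
      unfolding e using ij N unfolding S_def by auto
  qed (use Tc Sc in auto)
  have rowT: "(\<Sum>l<N. T $$ (i,l)) = (if i = 0 then 1 else 0)" if i: "i < N" for i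
  proof -
    have "(\<Sum>l<N. T $$ (i,l)) = (\<Sum>l<N. if i = 0 then (if l = 0 then 1 else 0) else (if l = i then 1 else 0) - (if l = 0 then 1 else 0))"
      unfolding T_def using i by (intro sum.cong refl) auto
    also have "\<dots> = (if i = 0 then 1 else 0)" using i N by (cases "i = 0") (simp_all add: sum_subtractf)
    finally show ?thesis .
  qed
  have ST: "S * T = 1\<^sub>m N" by (rule mat_mult_left_right_inverse[OF Tc Sc TS])
  define B where "B = T * (Dc * S)"
  have DS: "Dc * S \<in> carrier_mat N N" using Dc' Sc by auto
  have Bc: "B \<in> carrier_mat N N" unfolding B_def using Tc DS by auto
  have Bent: "B $$ (i,j) = (if i = 0 then (if j = 0 then 1 else Dc $$ (0,j)) else (if j = 0 then 0 else Dc $$ (i,j) - Dc $$ (0,j)))"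
    if ij: "i < N" "j < N" for i j
  proof -
    have ds: "(Dc * S) $$ (a,j) = (if j = 0 then 1 else Dc $$ (a,j))" if a: "a < N" for a
    proof -
      have "(Dc * S) $$ (a,j) = (if j = 0 then (\<Sum>l<N. Dc $$ (a,l)) else Dc $$ (a,j))"
        using YS[OF Dc' a ij(2) N] unfolding S_def .
      thus ?thesis using rs[of a] a unfolding N_def by simp
    qed
    have "B $$ (i,j) = (if i = 0 then (Dc * S) $$ (0,j) else (Dc * S) $$ (i,j) - (Dc * S) $$ (0,j))"
      using TiY[OF DS ij N] unfolding T_def B_def .
    thus ?thesis using ds[OF ij(1)] ds[OF N] by simp
  qed
  have Bblock: "B = four_block_mat (1\<^sub>m 1) Cr (0\<^sub>m m 1) G"
  proof (rule eq_matI)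
    fix i j assume ij: "i < dim_row (four_block_mat (1\<^sub>m 1) Cr (0\<^sub>m m 1) G)" "j < dim_col (four_block_mat (1\<^sub>m 1) Cr (0\<^sub>m m 1) G)"
    hence ij': "i < N" "j < N" unfolding G_def N_def by auto
    show "B $$ (i,j) = four_block_mat (1\<^sub>m 1) Cr (0\<^sub>m m 1) G $$ (i,j)"
      using Bent[OF ij'] ij ij' unfolding G_def Cr_def N_def
      by (cases i; cases j) auto
  qed (use Bc in \<open>auto simp: G_def N_def\<close>)
  have sim: "similar_mat Dc B"
  proof (rule similar_matI[of _ _ S T N])
    show "{Dc, B, S, T} \<subseteq> carrier_mat N N" using Dc' Bc Sc Tc by auto
    show "S * T = 1\<^sub>m N" by (rule ST)
    show "T * S = 1\<^sub>m N" by (rule TS)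
    have "S * B * T = S * (T * (Dc * S)) * T" unfolding B_def ..
    also have "\<dots> = (S * T) * (Dc * S) * T" using Sc Tc DS by (simp add: assoc_mult_mat[OF Sc Tc DS])
    also have "\<dots> = Dc * (S * T)" using Dc' Sc Tc DS by (simp add: ST)
    also have "\<dots> = Dc" using ST Dc' by simp
    finally show "Dc = S * B * T" by simp
  qed
  have Gc: "G \<in> carrier_mat m m" unfolding G_def by auto
  have c1: "char_poly (1\<^sub>m 1 :: complex mat) = [:-1,1:]"
    by (subst char_poly_upper_triangular[of _ 1]) (auto simp: upper_triangular_def diag_mat_def)
  have "char_poly Dc = char_poly B" by (rule char_poly_similar[OF sim])
  also have "\<dots> = char_poly (1\<^sub>m 1 :: complex mat) * char_poly G"
  proof (rule char_poly_0_block[OF Bblock])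
    show "\<exists>es. char_poly (1\<^sub>m 1 :: complex mat) = (\<Prod>a\<leftarrow>es. [:- a, 1:])"
      using c1 by (intro exI[of _ "[1]"]) simp
    show "\<exists>es. char_poly G = (\<Prod>a\<leftarrow>es. [:- a, 1:])" using char_poly_factorized[OF Gc] by blast
  qed (use Gc in \<open>auto simp: Cr_def\<close>)
  also note c1
  finally show ?thesis unfolding G_def .
qed

lemma mm_entry:
  assumes A: "A \<in> carrier_mat a b" and B: "B \<in> carrier_mat b c" and i: "i < a" and j: "j < c"
  shows "(A * B) $$ (i,j) = (\<Sum>l<b. A $$ (i,l) * B $$ (l,j))"
  using A B i j by (auto simp: scalar_prod_def lessThan_atLeast0)

lemma graph_identity:
  fixes D :: "real mat" and g :: "nat \<Rightarrow> real"
  assumes rs: "\<And>i. i < Suc m \<Longrightarrow> (\<Sum>j<Suc m. D $$ (i,j)) = 1" and i: "i < m"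
  shows "(\<Sum>j<Suc m. D $$ (Suc i,j) * (g (Suc i) - g j)) - (\<Sum>j<Suc m. D $$ (0,j) * (g 0 - g j))
    = (\<Sum>l<m. ((if i = l then 1 else 0) - D $$ (Suc i, Suc l) + D $$ (0, Suc l)) * (g (Suc l) - g 0))"
proof -
  define t where "t a = (\<Sum>l<m. D $$ (a, Suc l) * g (Suc l))" for a
  have s: "(\<Sum>l<m. D $$ (a, Suc l)) = 1 - D $$ (a,0)" if a: "a < Suc m" for a
    using rs[OF a] unfolding sum.lessThan_Suc_shift by simp
  have L: "(\<Sum>j<Suc m. D $$ (a,j) * (g a - g j)) = g a - D $$ (a,0) * g 0 - t a" if a: "a < Suc m" for a
  proof -
    have "(\<Sum>j<Suc m. D $$ (a,j) * (g a - g j)) = g a * (\<Sum>j<Suc m. D $$ (a,j)) - (\<Sum>j<Suc m. D $$ (a,j) * g j)"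
      by (simp add: sum_distrib_left sum_subtractf[symmetric] algebra_simps del: sum.lessThan_Suc)
    also have "(\<Sum>j<Suc m. D $$ (a,j) * g j) = D $$ (a,0) * g 0 + t a"
      unfolding t_def sum.lessThan_Suc_shift by simp
    finally show ?thesis using rs[OF a] by simp
  qed
  have R1: "(\<Sum>l<m. D $$ (a, Suc l) * (g (Suc l) - g 0)) = t a - g 0 * (1 - D $$ (a,0))" if a: "a < Suc m" for a
    unfolding t_def s[OF a, symmetric]
    by (simp add: sum_distrib_left sum_subtractf[symmetric] algebra_simps)
  have "(\<Sum>l<m. ((if i = l then 1 else 0) - D $$ (Suc i, Suc l) + D $$ (0, Suc l)) * (g (Suc l) - g 0))
      = (\<Sum>l<m. (if i = l then 1 else 0) * (g (Suc l) - g 0)) - (\<Sum>l<m. D $$ (Suc i, Suc l) * (g (Suc l) - g 0))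
        + (\<Sum>l<m. D $$ (0, Suc l) * (g (Suc l) - g 0))"
    by (simp only: sum.distrib[symmetric] sum_subtractf[symmetric] algebra_simps)
  also have "(\<Sum>l<m. (if i = l then 1 else 0) * (g (Suc l) - g 0)) = g (Suc i) - g 0"
    by (subst sum.cong[OF refl, of _ _ "\<lambda>l. if i = l then g (Suc l) - g 0 else 0"]) (use i in auto)
  finally show ?thesis using L[of "Suc i"] L[of 0] R1[of "Suc i"] R1[of 0] i
    by (simp add: algebra_simps)
qed


theorem theorem5:
  fixes N n p q :: nat
    and E :: "(nat \<times> nat) set"
    and D A B C K L :: "real mat"
    and lam :: "nat \<Rightarrow> complex"
    and h :: "nat \<Rightarrow> real vec"
    and x v u :: "nat \<Rightarrow> nat \<Rightarrow> real vec"
  assumes G: "in_Gamma N E"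
    and D: "row_stochastic_of N E D"
    and eigs: "char_poly (cmat D) = [:-1, 1:] * (\<Prod>i\<in>{1..<N}. [:- lam i, 1:])"
    and dimA: "A \<in> carrier_mat n n" and dimB: "B \<in> carrier_mat n p"
    and dimC: "C \<in> carrier_mat q n" and dimK: "K \<in> carrier_mat p n"
    and dimL: "L \<in> carrier_mat n q"
    and dimh: "\<And>i. i < N \<Longrightarrow> h i \<in> carrier_vec n"
    and stabK: "schur_stable (cmat (A + B * K))"
    and stabL: "\<And>i. i \<in> {1..<N} \<Longrightarrow> schur_stable (cmat A + (1 - lam i) \<cdot>\<^sub>m (cmat L * cmat C))"
    and hcond: "\<And>i j. i < N \<Longrightarrow> j < N \<Longrightarrow> (A - 1\<^sub>m n) *\<^sub>v (h i - h j) = 0\<^sub>v n"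
    and x0: "\<And>i. i < N \<Longrightarrow> x i 0 \<in> carrier_vec n"
    and v0: "\<And>i. i < N \<Longrightarrow> v i 0 \<in> carrier_vec n"
    and ctrl: "\<And>i k. i < N \<Longrightarrow> u i k = K *\<^sub>v v i k"
    and xdyn: "\<And>i k. i < N \<Longrightarrow> x i (Suc k) = A *\<^sub>v x i k + B *\<^sub>v u i k"
    and vdyn: "\<And>i k. i < N \<Longrightarrow> v i (Suc k) =
        (A + B * K) *\<^sub>v v i k
        + L *\<^sub>v (finsum_vec TYPE(real) q (\<lambda>j. D $$ (i,j) \<cdot>\<^sub>v (C *\<^sub>v (v i k - v j k))) {..<N}
                 - finsum_vec TYPE(real) q
                     (\<lambda>j. D $$ (i,j) \<cdot>\<^sub>v (C *\<^sub>v x i k - C *\<^sub>v x j k - C *\<^sub>v (h i - h j))) {..<N})"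
  shows "\<forall>i<N. \<forall>j<N. (\<lambda>k. vnorm (x i k - h i - x j k + h j)) \<longlonglongrightarrow> 0"
proof (intro allI impI)
  fix i0 j0 assume i0: "i0 < N" and j0: "j0 < N"
  then obtain m where Nm: "N = Suc m" by (cases N) auto
  have Dc: "D \<in> carrier_mat N N" using D unfolding row_stochastic_of_def by blast
  have rs: "\<And>i. i < N \<Longrightarrow> (\<Sum>j<N. D $$ (i,j)) = 1"
    using D unfolding row_stochastic_of_def by blast
  have dimx: "x i k \<in> carrier_vec n" if "i < N" for i k
  proof (cases k)
    case 0 thus ?thesis using x0[OF that] by simp
  next
    case (Suc k')
    have "dim_vec (x i k) = dim_row B" unfolding Suc by (simp only: xdyn[OF that] index_add_vec(2) dim_mult_mat_vec)
    thus ?thesis using carrier_matD(1)[OF dimB] by (intro carrier_vecI) simp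
  qed
  have dimv: "v i k \<in> carrier_vec n" if "i < N" for i k
  proof (cases k)
    case 0 thus ?thesis using v0[OF that] by simp
  next
    case (Suc k')
    have "dim_vec (v i k) = dim_row L" unfolding Suc by (simp only: vdyn[OF that] index_add_vec(2) dim_mult_mat_vec)
    thus ?thesis using carrier_matD(1)[OF dimL] by (intro carrier_vecI) simp
  qed
  define ee where "ee i k r = v i k $ r - x i k $ r + h i $ r" for i k r
  have erec: "ee i (Suc k) r = (\<Sum>c<n. A $$ (r,c) * ee i k c) - ((\<Sum>c<n. A $$ (r,c) * h i $ c) - h i $ r)
      + (\<Sum>s<q. L $$ (r,s) * (\<Sum>j<N. D $$ (i,j) * (\<Sum>c<n. C $$ (s,c) * (ee i k c - ee j k c))))"
    if i: "i < N" and r: "r < n" for i k r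
  proof -
    define F1 where "F1 = finsum_vec TYPE(real) q (\<lambda>j. D $$ (i,j) \<cdot>\<^sub>v (C *\<^sub>v (v i k - v j k))) {..<N}"
    define F2 where "F2 = finsum_vec TYPE(real) q
                     (\<lambda>j. D $$ (i,j) \<cdot>\<^sub>v (C *\<^sub>v x i k - C *\<^sub>v x j k - C *\<^sub>v (h i - h j))) {..<N}"
    have Cq: "dim_row C = q" "dim_col C = n" using dimC by auto
    have f1: "(\<lambda>j. D $$ (i,j) \<cdot>\<^sub>v (C *\<^sub>v (v i k - v j k))) \<in> {..<N} \<rightarrow> carrier_vec q"
      using Cq by (auto intro!: carrier_vecI)
    have f2: "(\<lambda>j. D $$ (i,j) \<cdot>\<^sub>v (C *\<^sub>v x i k - C *\<^sub>v x j k - C *\<^sub>v (h i - h j))) \<in> {..<N} \<rightarrow> carrier_vec q"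
      using Cq by (auto intro!: carrier_vecI)
    have F1c: "F1 \<in> carrier_vec q" unfolding F1_def by (rule finsum_vec_closed[OF f1])
    have F2c: "F2 \<in> carrier_vec q" unfolding F2_def by (rule finsum_vec_closed[OF f2])
    have Fc: "F1 - F2 \<in> carrier_vec q" using F2c by (intro carrier_vecI) simp
    have mvC: "(C *\<^sub>v y) $ s = (\<Sum>c<n. C $$ (s,c) * y $ c)" if "y \<in> carrier_vec n" "s < q" for y s
      by (rule mv_entry[OF dimC that])
    have dvi: "v a k \<in> carrier_vec n" "x a k \<in> carrier_vec n" "h a \<in> carrier_vec n" if "a < N" for a
      using dimv dimx dimh that by auto
    have Fs: "(F1 - F2) $ s = (\<Sum>j<N. D $$ (i,j) * (\<Sum>c<n. C $$ (s,c) * (ee i k c - ee j k c)))" if s: "s < q" for s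
    proof -
      have inner: "(\<Sum>c<n. C $$ (s,c) * (v i k $ c - v j k $ c)) - ((\<Sum>c<n. C $$ (s,c) * x i k $ c) - (\<Sum>c<n. C $$ (s,c) * x j k $ c)
          - (\<Sum>c<n. C $$ (s,c) * (h i $ c - h j $ c))) = (\<Sum>c<n. C $$ (s,c) * (ee i k c - ee j k c))" for j
        unfolding ee_def by (simp add: algebra_simps sum.distrib sum_subtractf)
      have "(\<Sum>j<N. D $$ (i,j) * (\<Sum>c<n. C $$ (s,c) * (v i k $ c - v j k $ c)))
          - (\<Sum>j<N. D $$ (i,j) * ((\<Sum>c<n. C $$ (s,c) * x i k $ c) - (\<Sum>c<n. C $$ (s,c) * x j k $ c)
          - (\<Sum>c<n. C $$ (s,c) * (h i $ c - h j $ c))))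
          = (\<Sum>j<N. D $$ (i,j) * (\<Sum>c<n. C $$ (s,c) * (v i k $ c - v j k $ c))
          - D $$ (i,j) * ((\<Sum>c<n. C $$ (s,c) * x i k $ c) - (\<Sum>c<n. C $$ (s,c) * x j k $ c)
          - (\<Sum>c<n. C $$ (s,c) * (h i $ c - h j $ c))))"
        by (rule sum_subtractf[symmetric])
      also have "\<dots> = (\<Sum>j<N. D $$ (i,j) * ((\<Sum>c<n. C $$ (s,c) * (v i k $ c - v j k $ c))
          - ((\<Sum>c<n. C $$ (s,c) * x i k $ c) - (\<Sum>c<n. C $$ (s,c) * x j k $ c)
          - (\<Sum>c<n. C $$ (s,c) * (h i $ c - h j $ c)))))"
        by (intro sum.cong refl) (simp only: right_diff_distrib)
      also have "\<dots> = (\<Sum>j<N. D $$ (i,j) * (\<Sum>c<n. C $$ (s,c) * (ee i k c - ee j k c)))"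
        unfolding inner ..
      finally have comb: "(\<Sum>j<N. D $$ (i,j) * (\<Sum>c<n. C $$ (s,c) * (v i k $ c - v j k $ c)))
          - (\<Sum>j<N. D $$ (i,j) * ((\<Sum>c<n. C $$ (s,c) * x i k $ c) - (\<Sum>c<n. C $$ (s,c) * x j k $ c)
          - (\<Sum>c<n. C $$ (s,c) * (h i $ c - h j $ c))))
          = (\<Sum>j<N. D $$ (i,j) * (\<Sum>c<n. C $$ (s,c) * (ee i k c - ee j k c)))" .
      have "(F1 - F2) $ s = F1 $ s - F2 $ s" using s F2c by simp
      also have "F1 $ s = (\<Sum>j<N. D $$ (i,j) * (\<Sum>c<n. C $$ (s,c) * (v i k $ c - v j k $ c)))"
        unfolding F1_def index_finsum_vec[OF finite_lessThan s f1]
      proof (intro sum.cong refl)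
        fix j assume j: "j \<in> {..<N}"
        have vv: "v i k - v j k \<in> carrier_vec n" using dvi(1)[OF j[simplified]] by (intro carrier_vecI) simp
        show "(D $$ (i,j) \<cdot>\<^sub>v (C *\<^sub>v (v i k - v j k))) $ s = D $$ (i,j) * (\<Sum>c<n. C $$ (s,c) * (v i k $ c - v j k $ c))"
          using s Cq mvC[OF vv s] dvi(1)[OF i] dvi(1)[of j] j by simp
      qed
      also have "F2 $ s = (\<Sum>j<N. D $$ (i,j) * ((\<Sum>c<n. C $$ (s,c) * x i k $ c) - (\<Sum>c<n. C $$ (s,c) * x j k $ c)
          - (\<Sum>c<n. C $$ (s,c) * (h i $ c - h j $ c))))"
        unfolding F2_def index_finsum_vec[OF finite_lessThan s f2]
      proof (intro sum.cong refl)
        fix j assume j: "j \<in> {..<N}"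
        hence j': "j < N" by simp
        have hh: "h i - h j \<in> carrier_vec n" using dvi(3)[OF j'] by (intro carrier_vecI) simp
        have e3: "(C *\<^sub>v (h i - h j)) $ s = (\<Sum>c<n. C $$ (s,c) * (h i $ c - h j $ c))"
          using mvC[OF hh s] dvi(3)[OF i] dvi(3)[OF j'] by (intro trans[OF mvC[OF hh s]] sum.cong refl) auto
        show "(D $$ (i,j) \<cdot>\<^sub>v (C *\<^sub>v x i k - C *\<^sub>v x j k - C *\<^sub>v (h i - h j))) $ s
          = D $$ (i,j) * ((\<Sum>c<n. C $$ (s,c) * x i k $ c) - (\<Sum>c<n. C $$ (s,c) * x j k $ c)
          - (\<Sum>c<n. C $$ (s,c) * (h i $ c - h j $ c)))"
          using s Cq mvC[OF dvi(2)[OF i] s] mvC[OF dvi(2)[OF j'] s] e3 by simp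
      qed
      also note comb
      finally show ?thesis .
    qed
    have BK: "B * K \<in> carrier_mat n n" by (rule mult_carrier_mat[OF dimB dimK])
    have ABK: "A + B * K \<in> carrier_mat n n" by (rule add_carrier_mat[OF BK])
    have vS: "v i (Suc k) $ r = (\<Sum>c<n. A $$ (r,c) * v i k $ c) + (\<Sum>c<n. (B * K) $$ (r,c) * v i k $ c)
        + (\<Sum>s<q. L $$ (r,s) * (\<Sum>j<N. D $$ (i,j) * (\<Sum>c<n. C $$ (s,c) * (ee i k c - ee j k c))))"
    proof -
      have "v i (Suc k) $ r = ((A + B * K) *\<^sub>v v i k) $ r + (L *\<^sub>v (F1 - F2)) $ r"
        unfolding vdyn[OF i] F1_def[symmetric] F2_def[symmetric] using r carrier_matD[OF dimL]
        by (subst index_add_vec) auto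
      also have "((A + B * K) *\<^sub>v v i k) $ r = (\<Sum>c<n. (A + B * K) $$ (r,c) * v i k $ c)"
        by (rule mv_entry[OF ABK dvi(1)[OF i] r])
      also have "\<dots> = (\<Sum>c<n. A $$ (r,c) * v i k $ c + (B * K) $$ (r,c) * v i k $ c)"
        using r carrier_matD[OF dimA] carrier_matD[OF BK] by (intro sum.cong refl) (auto simp: distrib_right)
      also have "\<dots> = (\<Sum>c<n. A $$ (r,c) * v i k $ c) + (\<Sum>c<n. (B * K) $$ (r,c) * v i k $ c)"
        by (rule sum.distrib)
      also have "(L *\<^sub>v (F1 - F2)) $ r = (\<Sum>s<q. L $$ (r,s) * (F1 - F2) $ s)" by (rule mv_entry[OF dimL Fc r])
      also have "\<dots> = (\<Sum>s<q. L $$ (r,s) * (\<Sum>j<N. D $$ (i,j) * (\<Sum>c<n. C $$ (s,c) * (ee i k c - ee j k c))))"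
        using Fs by simp
      finally show ?thesis .
    qed
    have xS: "x i (Suc k) $ r = (\<Sum>c<n. A $$ (r,c) * x i k $ c) + (\<Sum>c<n. (B * K) $$ (r,c) * v i k $ c)"
    proof -
      have "x i (Suc k) $ r = (A *\<^sub>v x i k) $ r + ((B * K) *\<^sub>v v i k) $ r"
        unfolding xdyn[OF i] ctrl[OF i] assoc_mult_mat_vec[OF dimB dimK dvi(1)[OF i], symmetric]
        using r carrier_matD[OF BK] by (subst index_add_vec) auto
      also have "(A *\<^sub>v x i k) $ r = (\<Sum>c<n. A $$ (r,c) * x i k $ c)" by (rule mv_entry[OF dimA dvi(2)[OF i] r])
      also have "((B * K) *\<^sub>v v i k) $ r = (\<Sum>c<n. (B * K) $$ (r,c) * v i k $ c)" by (rule mv_entry[OF BK dvi(1)[OF i] r])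
      finally show ?thesis .
    qed
    have Aee: "(\<Sum>c<n. A $$ (r,c) * ee i k c) = (\<Sum>c<n. A $$ (r,c) * v i k $ c) - (\<Sum>c<n. A $$ (r,c) * x i k $ c) + (\<Sum>c<n. A $$ (r,c) * h i $ c)"
      unfolding ee_def by (simp add: algebra_simps sum.distrib sum_subtractf)
    show ?thesis unfolding ee_def[of i "Suc k" r] using vS xS Aee by linarith
  qed
  have hA: "(\<Sum>c<n. A $$ (r,c) * h a $ c) - h a $ r = (\<Sum>c<n. A $$ (r,c) * h b $ c) - h b $ r"
    if a: "a < N" and b: "b < N" and r: "r < n" for a b r
  proof -
    have hab: "h a - h b \<in> carrier_vec n" using dimh[OF b] by (intro carrier_vecI) simp
    have AI: "A - 1\<^sub>m n \<in> carrier_mat n n" using minus_carrier_mat[OF one_carrier_mat] .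
    have "0 = ((A - 1\<^sub>m n) *\<^sub>v (h a - h b)) $ r" using hcond[OF a b] r by simp
    also have "\<dots> = (\<Sum>c<n. (A - 1\<^sub>m n) $$ (r,c) * (h a - h b) $ c)" by (rule mv_entry[OF AI hab r])
    also have "\<dots> = (\<Sum>c<n. A $$ (r,c) * h a $ c - A $$ (r,c) * h b $ c - (if r = c then h a $ c - h b $ c else 0))"
      by (intro sum.cong refl) (use r dimA dimh[OF a] dimh[OF b] in \<open>auto simp: algebra_simps\<close>)
    also have "\<dots> = (\<Sum>c<n. A $$ (r,c) * h a $ c) - (\<Sum>c<n. A $$ (r,c) * h b $ c) - (h a $ r - h b $ r)"
      using r by (simp add: sum_subtractf)
    finally show ?thesis by simp
  qed
  define w where "w i k r = ee (Suc i) k r - ee 0 k r" for i k r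
  define Rr where "Rr i l = (if i = l then 1 else 0) - D $$ (Suc i, Suc l) + D $$ (0, Suc l)" for i l
  have wrec: "w i (Suc k) r = (\<Sum>c<n. A $$ (r,c) * w i k c)
      + (\<Sum>s<q. L $$ (r,s) * (\<Sum>c<n. C $$ (s,c) * (\<Sum>l<m. Rr i l * w l k c)))"
    if i: "i < m" and r: "r < n" for i k r
  proof -
    define Y where "Y a s = (\<Sum>j<N. D $$ (a,j) * (\<Sum>c<n. C $$ (s,c) * (ee a k c - ee j k c)))" for a s
    have i1: "Suc i < N" and i0': "0 < N" using i Nm by auto
    have e1: "ee (Suc i) (Suc k) r = (\<Sum>c<n. A $$ (r,c) * ee (Suc i) k c) - ((\<Sum>c<n. A $$ (r,c) * h (Suc i) $ c) - h (Suc i) $ r)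
      + (\<Sum>s<q. L $$ (r,s) * Y (Suc i) s)" unfolding Y_def by (rule erec[OF i1 r])
    have e0: "ee 0 (Suc k) r = (\<Sum>c<n. A $$ (r,c) * ee 0 k c) - ((\<Sum>c<n. A $$ (r,c) * h 0 $ c) - h 0 $ r)
      + (\<Sum>s<q. L $$ (r,s) * Y 0 s)" unfolding Y_def by (rule erec[OF i0' r])
    have SAw: "(\<Sum>c<n. A $$ (r,c) * w i k c) = (\<Sum>c<n. A $$ (r,c) * ee (Suc i) k c) - (\<Sum>c<n. A $$ (r,c) * ee 0 k c)"
      unfolding w_def by (simp add: right_diff_distrib sum_subtractf)
    have Ysw: "Y a s = (\<Sum>c<n. C $$ (s,c) * (\<Sum>j<N. D $$ (a,j) * (ee a k c - ee j k c)))" for a s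
    proof -
      have "Y a s = (\<Sum>j<N. \<Sum>c<n. D $$ (a,j) * (C $$ (s,c) * (ee a k c - ee j k c)))"
        unfolding Y_def by (simp add: sum_distrib_left)
      also have "\<dots> = (\<Sum>c<n. \<Sum>j<N. D $$ (a,j) * (C $$ (s,c) * (ee a k c - ee j k c)))" by (rule sum.swap)
      also have "\<dots> = (\<Sum>c<n. C $$ (s,c) * (\<Sum>j<N. D $$ (a,j) * (ee a k c - ee j k c)))"
        by (simp add: sum_distrib_left mult.left_commute)
      finally show ?thesis .
    qed
    have rs': "(\<Sum>j<Suc m. D $$ (a,j)) = 1" if "a < Suc m" for a using rs[of a] that Nm by simp
    have gi: "(\<Sum>j<N. D $$ (Suc i,j) * (ee (Suc i) k c - ee j k c)) - (\<Sum>j<N. D $$ (0,j) * (ee 0 k c - ee j k c))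
        = (\<Sum>l<m. Rr i l * w l k c)" for c
      using graph_identity[of m D i "\<lambda>j. ee j k c", OF rs' i] Nm unfolding Rr_def w_def by simp
    have LY: "(\<Sum>s<q. L $$ (r,s) * (\<Sum>c<n. C $$ (s,c) * (\<Sum>l<m. Rr i l * w l k c)))
        = (\<Sum>s<q. L $$ (r,s) * Y (Suc i) s) - (\<Sum>s<q. L $$ (r,s) * Y 0 s)"
      unfolding Ysw gi[symmetric] by (simp add: right_diff_distrib sum_subtractf)
    show ?thesis unfolding w_def[of i "Suc k"] using e1 e0 SAw LY hA[OF i1 i0' r] unfolding w_def by linarith
  qed
  define Wc where "Wc k = mat n m (\<lambda>(r,i). complex_of_real (w i k r))" for k
  define Rc where "Rc = mat m m (\<lambda>(i,l). complex_of_real (Rr i l))"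
  define Ac where "Ac = cmat A"
  define Lc where "Lc = cmat L"
  define Cc where "Cc = cmat C"
  have Ac: "Ac \<in> carrier_mat n n" and Lc: "Lc \<in> carrier_mat n q" and Cc: "Cc \<in> carrier_mat q n"
    and Wcc: "\<And>k. Wc k \<in> carrier_mat n m" and Rcc: "Rc \<in> carrier_mat m m"
    using dimA dimL dimC by (auto simp: Ac_def Lc_def Cc_def cmat_def Wc_def Rc_def)
  have Wrec: "Wc (Suc k) = Ac * Wc k + Lc * (Cc * (Wc k * transpose_mat Rc))" for k
  proof -
    have Rt: "transpose_mat Rc \<in> carrier_mat m m" using Rcc by simp
    have Y: "Wc k * transpose_mat Rc \<in> carrier_mat n m" using mult_carrier_mat[OF Wcc Rt] .
    have X: "Cc * (Wc k * transpose_mat Rc) \<in> carrier_mat q m" using mult_carrier_mat[OF Cc Y] .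
    have V: "Lc * (Cc * (Wc k * transpose_mat Rc)) \<in> carrier_mat n m" using mult_carrier_mat[OF Lc X] .
    have AW: "Ac * Wc k \<in> carrier_mat n m" using mult_carrier_mat[OF Ac Wcc] .
    show ?thesis
    proof (rule eq_matI)
      fix r i assume ri: "r < dim_row (Ac * Wc k + Lc * (Cc * (Wc k * transpose_mat Rc)))"
        "i < dim_col (Ac * Wc k + Lc * (Cc * (Wc k * transpose_mat Rc)))"
      hence r: "r < n" and i: "i < m" using V by auto
      have Ye: "(Wc k * transpose_mat Rc) $$ (c,i) = complex_of_real (\<Sum>l<m. Rr i l * w l k c)" if c: "c < n" for c
      proof -
        have "(Wc k * transpose_mat Rc) $$ (c,i) = (\<Sum>l<m. Wc k $$ (c,l) * transpose_mat Rc $$ (l,i))"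
          by (rule mm_entry[OF Wcc Rt c i])
        also have "\<dots> = (\<Sum>l<m. complex_of_real (Rr i l * w l k c))"
          by (intro sum.cong refl) (use c i Rcc in \<open>auto simp: Wc_def Rc_def\<close>)
        finally show ?thesis by simp
      qed
      have Xe: "(Cc * (Wc k * transpose_mat Rc)) $$ (s,i) = complex_of_real (\<Sum>c<n. C $$ (s,c) * (\<Sum>l<m. Rr i l * w l k c))"
        if s: "s < q" for s
      proof -
        have "(Cc * (Wc k * transpose_mat Rc)) $$ (s,i) = (\<Sum>c<n. Cc $$ (s,c) * (Wc k * transpose_mat Rc) $$ (c,i))"
          by (rule mm_entry[OF Cc Y s i])
        also have "\<dots> = (\<Sum>c<n. complex_of_real (C $$ (s,c) * (\<Sum>l<m. Rr i l * w l k c)))"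
          by (intro sum.cong refl) (use s dimC Ye in \<open>auto simp: Cc_def cmat_def simp del: of_real_sum\<close>)
        finally show ?thesis by simp
      qed
      have Ve: "(Lc * (Cc * (Wc k * transpose_mat Rc))) $$ (r,i) = complex_of_real (\<Sum>s<q. L $$ (r,s) * (\<Sum>c<n. C $$ (s,c) * (\<Sum>l<m. Rr i l * w l k c)))"
      proof -
        have "(Lc * (Cc * (Wc k * transpose_mat Rc))) $$ (r,i) = (\<Sum>s<q. Lc $$ (r,s) * (Cc * (Wc k * transpose_mat Rc)) $$ (s,i))"
          by (rule mm_entry[OF Lc X r i])
        also have "\<dots> = (\<Sum>s<q. complex_of_real (L $$ (r,s) * (\<Sum>c<n. C $$ (s,c) * (\<Sum>l<m. Rr i l * w l k c))))"
          by (intro sum.cong refl) (use r dimL Xe in \<open>auto simp: Lc_def cmat_def simp del: of_real_sum\<close>)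
        finally show ?thesis by simp
      qed
      have Ae: "(Ac * Wc k) $$ (r,i) = complex_of_real (\<Sum>c<n. A $$ (r,c) * w i k c)"
      proof -
        have "(Ac * Wc k) $$ (r,i) = (\<Sum>c<n. Ac $$ (r,c) * Wc k $$ (c,i))" by (rule mm_entry[OF Ac Wcc r i])
        also have "\<dots> = (\<Sum>c<n. complex_of_real (A $$ (r,c) * w i k c))"
          by (intro sum.cong refl) (use r i dimA in \<open>auto simp: Ac_def cmat_def Wc_def\<close>)
        finally show ?thesis by simp
      qed
      have "(Ac * Wc k + Lc * (Cc * (Wc k * transpose_mat Rc))) $$ (r,i) = (Ac * Wc k) $$ (r,i) + (Lc * (Cc * (Wc k * transpose_mat Rc))) $$ (r,i)"
        using r i carrier_matD[OF V] by (subst index_add_mat) auto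
      also have "\<dots> = complex_of_real (w i (Suc k) r)" unfolding Ae Ve wrec[OF i r] by simp
      also have "\<dots> = Wc (Suc k) $$ (r,i)" unfolding Wc_def using r i by simp
      finally show "Wc (Suc k) $$ (r,i) = (Ac * Wc k + Lc * (Cc * (Wc k * transpose_mat Rc))) $$ (r,i)" by simp
    qed (use carrier_matD[OF V] carrier_matD[OF Wcc[of "Suc k"]] Lc Rcc in auto)
  qed
  define Dred where "Dred = mat m m (\<lambda>(i,j). cmat D $$ (Suc i, Suc j) - cmat D $$ (0, Suc j))"
  have Dredc: "Dred \<in> carrier_mat m m" unfolding Dred_def by auto
  have cD: "cmat D $$ (a,b) = complex_of_real (D $$ (a,b))" if "a < N" "b < N" for a b
    using that Dc unfolding cmat_def by simp
  have RcD: "Rc = 1\<^sub>m m - Dred"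
  proof (rule eq_matI)
    fix i j assume ij: "i < dim_row (1\<^sub>m m - Dred)" "j < dim_col (1\<^sub>m m - Dred)"
    hence ij: "i < m" "j < m" using Dredc by auto
    show "Rc $$ (i,j) = (1\<^sub>m m - Dred) $$ (i,j)"
      using ij Dredc cD[of "Suc i" "Suc j"] cD[of 0 "Suc j"] Nm unfolding Rc_def Rr_def Dred_def by auto
  qed (use Rcc Dredc in auto)
  have cpD: "char_poly Dred = (\<Prod>a\<leftarrow>map lam [1..<N]. [:- a, 1:])"
  proof -
    have cDc: "cmat D \<in> carrier_mat (Suc m) (Suc m)" using Dc Nm unfolding cmat_def by auto
    have rsc: "(\<Sum>j<Suc m. cmat D $$ (i,j)) = 1" if i: "i < Suc m" for i
    proof -
      have "(\<Sum>j<Suc m. cmat D $$ (i,j)) = (\<Sum>j<Suc m. complex_of_real (D $$ (i,j)))"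
        using i Nm by (intro sum.cong refl) (simp add: cD)
      also have "\<dots> = complex_of_real (\<Sum>j<N. D $$ (i,j))" using Nm by simp
      also have "\<dots> = 1" using rs[of i] i Nm by simp
      finally show ?thesis .
    qed
    have "[:-1,1:] * char_poly Dred = [:-1, 1:] * (\<Prod>i\<in>{1..<N}. [:- lam i, 1:])"
      using char_poly_reduce[OF cDc rsc] eigs unfolding Dred_def by simp
    moreover have nz: "[:-1,1::complex:] \<noteq> 0" by simp
    ultimately have "char_poly Dred = (\<Prod>i\<in>{1..<N}. [:- lam i, 1:])"
      using mult_left_cancel[OF nz] by blast
    also have "\<dots> = (\<Prod>i\<leftarrow>[1..<N]. [:- lam i, 1:])"
      by (subst prod.distinct_set_conv_list[symmetric]) auto
    also have "\<dots> = (\<Prod>a\<leftarrow>map lam [1..<N]. [:- a, 1:])" by (simp add: comp_def)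
    finally show ?thesis .
  qed
  obtain T P Q where schur: "schur_decomposition Dred (map lam [1..<N]) = (T,P,Q)"
    by (cases "schur_decomposition Dred (map lam [1..<N])") auto
  from schur_decomposition[OF Dredc cpD schur]
  have sw: "similar_mat_wit Dred T P Q" and ut: "upper_triangular T" and dg: "diag_mat T = map lam [1..<N]"
    by auto
  have Tc: "T \<in> carrier_mat m m" and Pc: "P \<in> carrier_mat m m" and Qc: "Q \<in> carrier_mat m m"
    and PQ: "P * Q = 1\<^sub>m m" and QP: "Q * P = 1\<^sub>m m" and DPTQ: "Dred = P * T * Q"
    using sw Dredc unfolding similar_mat_wit_def Let_def by auto
  have Tdiag: "T $$ (i,i) = lam (Suc i)" if i: "i < m" for i
  proof -
    have "T $$ (i,i) = diag_mat T ! i" using i Tc by (simp add: diag_mat_def)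
    also have "\<dots> = lam (Suc i)" unfolding dg using i Nm by (simp del: upt_Suc)
    finally show ?thesis .
  qed
  have PT: "P * T \<in> carrier_mat m m" using Pc Tc by simp
  have QD: "Q * Dred = T * Q"
  proof -
    have "Q * Dred = Q * ((P * T) * Q)" using DPTQ by simp
    also have "\<dots> = (Q * (P * T)) * Q" using assoc_mult_mat[OF Qc PT Qc] by simp
    also have "Q * (P * T) = (Q * P) * T" using assoc_mult_mat[OF Qc Pc Tc] by simp
    also have "\<dots> = T" using QP Tc by simp
    finally show ?thesis .
  qed
  have QR: "Q * Rc = (1\<^sub>m m - T) * Q"
  proof -
    have "Q * Rc = Q * 1\<^sub>m m - Q * Dred" unfolding RcD by (rule mult_minus_distrib_mat[OF Qc one_carrier_mat Dredc])
    also have "\<dots> = Q - T * Q" using Qc QD by simp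
    also have "\<dots> = 1\<^sub>m m * Q - T * Q" using Qc by simp
    also have "\<dots> = (1\<^sub>m m - T) * Q" by (rule minus_mult_distrib_mat[symmetric, OF one_carrier_mat Tc Qc])
    finally show ?thesis .
  qed
  define Z where "Z k = Wc k * transpose_mat Q" for k
  have Zc: "Z k \<in> carrier_mat n m" for k unfolding Z_def by (rule mult_carrier_mat[OF Wcc]) (simp add: Qc)
  have Zrec: "Z (Suc k) = Ac * Z k + Lc * (Cc * (Z k * transpose_mat (1\<^sub>m m - T)))" for k
  proof -
    have Qt: "transpose_mat Q \<in> carrier_mat m m" and Rt: "transpose_mat Rc \<in> carrier_mat m m"
      and Ut: "transpose_mat (1\<^sub>m m - T) \<in> carrier_mat m m" using Qc Rcc Tc by auto
    have W: "Wc k \<in> carrier_mat n m" by (rule Wcc)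
    have WR: "Wc k * transpose_mat Rc \<in> carrier_mat n m" using W Rt by simp
    have CWR: "Cc * (Wc k * transpose_mat Rc) \<in> carrier_mat q m" using Cc WR by simp
    have "Z (Suc k) = (Ac * Wc k + Lc * (Cc * (Wc k * transpose_mat Rc))) * transpose_mat Q"
      unfolding Z_def Wrec ..
    also have "\<dots> = (Ac * Wc k) * transpose_mat Q + (Lc * (Cc * (Wc k * transpose_mat Rc))) * transpose_mat Q"
      by (rule add_mult_distrib_mat[OF _ _ Qt]) (use Ac W Lc CWR in auto)
    also have "(Ac * Wc k) * transpose_mat Q = Ac * Z k" unfolding Z_def using assoc_mult_mat[OF Ac W Qt] .
    also have "(Lc * (Cc * (Wc k * transpose_mat Rc))) * transpose_mat Q
        = Lc * (Cc * ((Wc k * transpose_mat Rc) * transpose_mat Q))"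
      using assoc_mult_mat[OF Lc CWR Qt] assoc_mult_mat[OF Cc WR Qt] by simp
    also have "(Wc k * transpose_mat Rc) * transpose_mat Q = Wc k * (transpose_mat Rc * transpose_mat Q)"
      using assoc_mult_mat[OF W Rt Qt] .
    also have "transpose_mat Rc * transpose_mat Q = transpose_mat (Q * Rc)"
      using transpose_mult[OF Qc Rcc] by simp
    also have "\<dots> = transpose_mat Q * transpose_mat (1\<^sub>m m - T)"
      unfolding QR using transpose_mult[OF minus_carrier_mat[OF Tc] Qc] .
    also have "Wc k * (transpose_mat Q * transpose_mat (1\<^sub>m m - T)) = Z k * transpose_mat (1\<^sub>m m - T)"
      unfolding Z_def using assoc_mult_mat[OF W Qt Ut] by simp
    finally show ?thesis .
  qed
  define G where "G = Lc * Cc"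
  have Gc: "G \<in> carrier_mat n n" unfolding G_def using Lc Cc by simp
  define Ut where "Ut = transpose_mat (1\<^sub>m m - T)"
  have Utc: "Ut \<in> carrier_mat m m" unfolding Ut_def using minus_carrier_mat[OF Tc] by simp
  have Ute: "Ut $$ (j,i) = (if i = j then 1 else 0) - T $$ (i,j)" if "i < m" "j < m" for i j
    unfolding Ut_def using that Tc by simp
  have Zrec': "Z (Suc k) = Ac * Z k + G * (Z k * Ut)" for k
  proof -
    have ZU: "Z k * Ut \<in> carrier_mat n m" using mult_carrier_mat[OF Zc Utc] .
    show ?thesis unfolding Zrec Ut_def[symmetric] G_def
      using assoc_mult_mat[OF Lc Cc ZU] by simp
  qed
  have main: "\<forall>c<n. (\<lambda>k. Z k $$ (c,i)) \<longlonglongrightarrow> 0" if "i < m" for i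
    using that
  proof (induction "m - i" arbitrary: i rule: less_induct)
    case less
    have IH: "(\<lambda>k. Z k $$ (c,j)) \<longlonglongrightarrow> 0" if "i < j" "j < m" "c < n" for j c
      using less.hyps[of j] that by auto
    note i = less.prems
    define M where "M = Ac + (1 - T $$ (i,i)) \<cdot>\<^sub>m G"
    have Mc: "M \<in> carrier_mat n n" unfolding M_def using Ac Gc by simp
    have st: "cmod \<mu> < 1" if "eigenvalue M \<mu>" for \<mu>
    proof -
      have "M = cmat A + (1 - lam (Suc i)) \<cdot>\<^sub>m (cmat L * cmat C)"
        unfolding M_def Ac_def G_def Lc_def Cc_def Tdiag[OF i] ..
      moreover have "Suc i \<in> {1..<N}" using i Nm by auto
      ultimately show ?thesis using stabL[of "Suc i"] that unfolding schur_stable_def by auto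
    qed
    define zz where "zz k = col (Z k) i" for k
    define uu where "uu k = zz (Suc k) - M *\<^sub>v zz k" for k
    have zzc: "zz k \<in> carrier_vec n" for k unfolding zz_def using Zc[of k] by (intro carrier_vecI) simp
    have uuc: "uu k \<in> carrier_vec n" for k unfolding uu_def using Mc by (intro carrier_vecI) simp
    have rec: "zz (Suc k) = M *\<^sub>v zz k + uu k" for k
    proof (rule eq_vecI)
      show "dim_vec (zz (Suc k)) = dim_vec (M *\<^sub>v zz k + uu k)"
        using carrier_vecD[OF zzc[of "Suc k"]] carrier_vecD[OF uuc[of k]] by simp
      fix r assume "r < dim_vec (M *\<^sub>v zz k + uu k)"
      hence r: "r < n" using carrier_vecD[OF uuc[of k]] by simp
      show "zz (Suc k) $ r = (M *\<^sub>v zz k + uu k) $ r" unfolding uu_def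
        using r carrier_vecD[OF zzc[of k]] carrier_vecD[OF zzc[of "Suc k"]] Mc by simp
    qed
    have uue: "uu k $ r = (\<Sum>c<n. G $$ (r,c) * (\<Sum>j\<in>{..<m} - {i}. Z k $$ (c,j) * Ut $$ (j,i)))"
      if r: "r < n" for k r
    proof -
      have ZU: "Z k * Ut \<in> carrier_mat n m" using mult_carrier_mat[OF Zc Utc] .
      have zze: "zz j $ c = Z j $$ (c,i)" if "c < n" for c j unfolding zz_def using that i Zc[of j] by simp
      have e1: "zz (Suc k) $ r = (\<Sum>c<n. Ac $$ (r,c) * Z k $$ (c,i)) + (\<Sum>c<n. G $$ (r,c) * (\<Sum>j<m. Z k $$ (c,j) * Ut $$ (j,i)))"
      proof -
        have "zz (Suc k) $ r = (Ac * Z k) $$ (r,i) + (G * (Z k * Ut)) $$ (r,i)"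
          unfolding zze[OF r] Zrec' using r i carrier_matD[OF Ac] carrier_matD[OF Gc] carrier_matD[OF Zc[of k]] carrier_matD[OF ZU]
          by (subst index_add_mat) auto
        also have "(Ac * Z k) $$ (r,i) = (\<Sum>c<n. Ac $$ (r,c) * Z k $$ (c,i))" by (rule mm_entry[OF Ac Zc r i])
        also have "(G * (Z k * Ut)) $$ (r,i) = (\<Sum>c<n. G $$ (r,c) * (Z k * Ut) $$ (c,i))" by (rule mm_entry[OF Gc ZU r i])
        also have "\<dots> = (\<Sum>c<n. G $$ (r,c) * (\<Sum>j<m. Z k $$ (c,j) * Ut $$ (j,i)))"
          by (intro sum.cong refl arg_cong2[where f="(*)"] mm_entry[OF Zc Utc _ i]) auto
        finally show ?thesis .
      qed
      have e2: "(M *\<^sub>v zz k) $ r = (\<Sum>c<n. Ac $$ (r,c) * Z k $$ (c,i)) + (\<Sum>c<n. G $$ (r,c) * ((1 - T $$ (i,i)) * Z k $$ (c,i)))"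
      proof -
        have "(M *\<^sub>v zz k) $ r = (\<Sum>c<n. M $$ (r,c) * zz k $ c)" by (rule mv_entry[OF Mc zzc r])
        also have "\<dots> = (\<Sum>c<n. Ac $$ (r,c) * Z k $$ (c,i) + G $$ (r,c) * ((1 - T $$ (i,i)) * Z k $$ (c,i)))"
          by (intro sum.cong refl) (use r Ac Gc zze in \<open>auto simp: M_def algebra_simps\<close>)
        finally show ?thesis by (simp add: sum.distrib)
      qed
      have e3: "(\<Sum>j<m. Z k $$ (c,j) * Ut $$ (j,i)) = (1 - T $$ (i,i)) * Z k $$ (c,i) + (\<Sum>j\<in>{..<m} - {i}. Z k $$ (c,j) * Ut $$ (j,i))" for c
        using sum.remove[of "{..<m}" i "\<lambda>j. Z k $$ (c,j) * Ut $$ (j,i)"] i Ute[OF i i] by (simp add: mult.commute)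
      have "uu k $ r = zz (Suc k) $ r - (M *\<^sub>v zz k) $ r" unfolding uu_def using r Mc by simp
      also have "\<dots> = (\<Sum>c<n. G $$ (r,c) * (\<Sum>j<m. Z k $$ (c,j) * Ut $$ (j,i))) - (\<Sum>c<n. G $$ (r,c) * ((1 - T $$ (i,i)) * Z k $$ (c,i)))"
        unfolding e1 e2 by simp
      also have "\<dots> = (\<Sum>c<n. G $$ (r,c) * ((\<Sum>j<m. Z k $$ (c,j) * Ut $$ (j,i)) - (1 - T $$ (i,i)) * Z k $$ (c,i)))"
        by (simp add: sum_subtractf right_diff_distrib)
      also have "\<dots> = (\<Sum>c<n. G $$ (r,c) * (\<Sum>j\<in>{..<m} - {i}. Z k $$ (c,j) * Ut $$ (j,i)))"
        unfolding e3 by simp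
      finally show ?thesis .
    qed
    have ul: "(\<lambda>k. uu k $ r) \<longlonglongrightarrow> 0" if r: "r < n" for r
    proof -
      have t: "(\<lambda>k. Z k $$ (c,j) * Ut $$ (j,i)) \<longlonglongrightarrow> 0" if "j \<in> {..<m} - {i}" "c < n" for j c
      proof (cases "j < i")
        case True
        have "T $$ (i,j) = 0" using ut True i Tc unfolding upper_triangular_def by auto
        hence "Ut $$ (j,i) = 0" using Ute[OF i, of j] True i by simp
        thus ?thesis by simp
      next
        case False
        hence "i < j" "j < m" using that by auto
        from IH[OF this that(2)] show ?thesis by (rule tendsto_mult_left_zero)
      qed
      show ?thesis unfolding uue[OF r]
        by (intro tendsto_null_sum tendsto_mult_right_zero) (use t in auto)
    qed
    show ?case
    proof (intro allI impI)
      fix c assume c: "c < n"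
      have e: "zz k $ c = Z k $$ (c,i)" for k unfolding zz_def using c i Zc[of k] by simp
      from iss[OF Mc st zzc uuc rec ul c] show "(\<lambda>k. Z k $$ (c,i)) \<longlonglongrightarrow> 0"
        unfolding e .
    qed
  qed
  have Zlim: "(\<lambda>k. Z k $$ (c,i)) \<longlonglongrightarrow> 0" if "i < m" "c < n" for i c
    using main that by blast
  have WZ: "Wc k = Z k * transpose_mat P" for k
  proof -
    have Qt: "transpose_mat Q \<in> carrier_mat m m" and Pt: "transpose_mat P \<in> carrier_mat m m"
      using Qc Pc by auto
    have "transpose_mat Q * transpose_mat P = 1\<^sub>m m"
      using transpose_mult[OF Pc Qc] PQ by simp
    hence "Z k * transpose_mat P = Wc k * 1\<^sub>m m"
      unfolding Z_def using assoc_mult_mat[OF Wcc Qt Pt] by simp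
    thus ?thesis using Wcc[of k] by simp
  qed
  have Wlim: "(\<lambda>k. w i k c) \<longlonglongrightarrow> 0" if i: "i < m" and c: "c < n" for i c
  proof -
    have eq: "complex_of_real (w i k c) = (\<Sum>l<m. Z k $$ (c,l) * transpose_mat P $$ (l,i))" for k
    proof -
      have "complex_of_real (w i k c) = Wc k $$ (c,i)" unfolding Wc_def using i c by simp
      also have "\<dots> = (\<Sum>l<m. Z k $$ (c,l) * transpose_mat P $$ (l,i))"
        unfolding WZ by (rule mm_entry[OF Zc _ c i]) (use Pc in auto)
      finally show ?thesis .
    qed
    have "(\<lambda>k. (\<Sum>l<m. Z k $$ (c,l) * transpose_mat P $$ (l,i))) \<longlonglongrightarrow> 0"
      by (intro tendsto_null_sum tendsto_mult_left_zero Zlim c) auto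
    hence "(\<lambda>k. complex_of_real (w i k c)) \<longlonglongrightarrow> complex_of_real 0" unfolding eq by simp
    thus ?thesis by (simp only: tendsto_of_real_iff)
  qed
  define dx where "dx a k r = x a k $ r - h a $ r - x 0 k $ r + h 0 $ r" for a k r
  have BK: "B * K \<in> carrier_mat n n" by (rule mult_carrier_mat[OF dimB dimK])
  have ABK: "A + B * K \<in> carrier_mat n n" by (rule add_carrier_mat[OF BK])
  have xS: "x a (Suc k) $ r = (\<Sum>c<n. A $$ (r,c) * x a k $ c) + (\<Sum>c<n. (B * K) $$ (r,c) * v a k $ c)"
    if a: "a < N" and r: "r < n" for a k r
  proof -
    have "x a (Suc k) $ r = (A *\<^sub>v x a k) $ r + ((B * K) *\<^sub>v v a k) $ r"
      unfolding xdyn[OF a] ctrl[OF a] assoc_mult_mat_vec[OF dimB dimK dimv[OF a], symmetric]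
      using r carrier_matD[OF BK] by (subst index_add_vec) auto
    also have "(A *\<^sub>v x a k) $ r = (\<Sum>c<n. A $$ (r,c) * x a k $ c)" by (rule mv_entry[OF dimA dimx[OF a] r])
    also have "((B * K) *\<^sub>v v a k) $ r = (\<Sum>c<n. (B * K) $$ (r,c) * v a k $ c)" by (rule mv_entry[OF BK dimv[OF a] r])
    finally show ?thesis .
  qed
  define de where "de a k c = ee a k c - ee 0 k c" for a k c
  have delim: "(\<lambda>k. de a k c) \<longlonglongrightarrow> 0" if a: "a < N" and c: "c < n" for a c
  proof (cases a)
    case 0 thus ?thesis unfolding de_def by simp
  next
    case (Suc l)
    hence "l < m" using a Nm by simp
    from Wlim[OF this c] show ?thesis unfolding de_def w_def Suc .
  qed
  have dxrec: "dx a (Suc k) r = (\<Sum>c<n. (A + B * K) $$ (r,c) * dx a k c) + (\<Sum>c<n. (B * K) $$ (r,c) * de a k c)"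
    if a: "a < N" and r: "r < n" for a k r
  proof -
    have N0: "0 < N" using Nm by simp
    have s1: "(\<Sum>c<n. (A + B * K) $$ (r,c) * dx a k c) = (\<Sum>c<n. A $$ (r,c) * dx a k c) + (\<Sum>c<n. (B * K) $$ (r,c) * dx a k c)"
    proof -
      have "(\<Sum>c<n. (A + B * K) $$ (r,c) * dx a k c) = (\<Sum>c<n. A $$ (r,c) * dx a k c + (B * K) $$ (r,c) * dx a k c)"
        using r carrier_matD[OF dimA] carrier_matD[OF BK] by (intro sum.cong refl) (auto simp: distrib_right)
      thus ?thesis by (simp add: sum.distrib)
    qed
    have s2: "(\<Sum>c<n. A $$ (r,c) * dx a k c) = (\<Sum>c<n. A $$ (r,c) * x a k $ c) - (\<Sum>c<n. A $$ (r,c) * h a $ c)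
       - (\<Sum>c<n. A $$ (r,c) * x 0 k $ c) + (\<Sum>c<n. A $$ (r,c) * h 0 $ c)"
      unfolding dx_def by (simp add: algebra_simps sum.distrib sum_subtractf)
    have s3: "(\<Sum>c<n. (B * K) $$ (r,c) * dx a k c) + (\<Sum>c<n. (B * K) $$ (r,c) * de a k c)
       = (\<Sum>c<n. (B * K) $$ (r,c) * v a k $ c) - (\<Sum>c<n. (B * K) $$ (r,c) * v 0 k $ c)"
      unfolding dx_def de_def ee_def by (simp add: algebra_simps sum.distrib sum_subtractf)
    show ?thesis unfolding dx_def[of a "Suc k" r] xS[OF a r] xS[OF N0 r]
      using s1 s2 s3 hA[OF a N0 r] unfolding dx_def by linarith
  qed
  have dxlim: "(\<lambda>k. dx a k r) \<longlonglongrightarrow> 0" if a: "a < N" and r: "r < n" for a r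
  proof -
    define M where "M = cmat (A + B * K)"
    have Mc: "M \<in> carrier_mat n n" unfolding M_def cmat_def using ABK by simp
    have Me: "M $$ (r',c) = complex_of_real ((A + B * K) $$ (r',c))" if "r' < n" "c < n" for r' c
      unfolding M_def cmat_def using that carrier_matD[OF ABK] by simp
    have st: "cmod \<mu> < 1" if "eigenvalue M \<mu>" for \<mu>
      using stabK that unfolding schur_stable_def M_def by auto
    define zz where "zz k = vec n (\<lambda>r. complex_of_real (dx a k r))" for k
    define uu where "uu k = zz (Suc k) - M *\<^sub>v zz k" for k
    have zzc: "zz k \<in> carrier_vec n" for k unfolding zz_def by simp
    have uuc: "uu k \<in> carrier_vec n" for k unfolding uu_def using carrier_matD[OF Mc] by (intro carrier_vecI) simp
    have rec: "zz (Suc k) = M *\<^sub>v zz k + uu k" for k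
    proof (rule eq_vecI)
      show "dim_vec (zz (Suc k)) = dim_vec (M *\<^sub>v zz k + uu k)"
        using carrier_vecD[OF zzc[of "Suc k"]] carrier_vecD[OF uuc[of k]] by simp
      fix r assume "r < dim_vec (M *\<^sub>v zz k + uu k)"
      hence r: "r < n" using carrier_vecD[OF uuc[of k]] by simp
      show "zz (Suc k) $ r = (M *\<^sub>v zz k + uu k) $ r" unfolding uu_def
        using r carrier_vecD[OF zzc[of k]] carrier_vecD[OF zzc[of "Suc k"]] carrier_matD[OF Mc] by simp
    qed
    have uue: "uu k $ r' = complex_of_real (\<Sum>c<n. (B * K) $$ (r',c) * de a k c)" if r': "r' < n" for k r'
    proof -
      have "(M *\<^sub>v zz k) $ r' = (\<Sum>c<n. M $$ (r',c) * zz k $ c)" by (rule mv_entry[OF Mc zzc r'])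
      also have "\<dots> = (\<Sum>c<n. complex_of_real ((A + B * K) $$ (r',c) * dx a k c))"
        by (intro sum.cong refl) (use r' Me in \<open>auto simp: zz_def\<close>)
      finally have "(M *\<^sub>v zz k) $ r' = complex_of_real (\<Sum>c<n. (A + B * K) $$ (r',c) * dx a k c)" by simp
      moreover have "uu k $ r' = zz (Suc k) $ r' - (M *\<^sub>v zz k) $ r'" unfolding uu_def using r' carrier_matD[OF Mc] by simp
      moreover have "zz (Suc k) $ r' = complex_of_real (dx a (Suc k) r')" unfolding zz_def using r' by simp
      ultimately show ?thesis unfolding dxrec[OF a r'] by simp
    qed
    have ul: "(\<lambda>k. uu k $ r') \<longlonglongrightarrow> 0" if r': "r' < n" for r'
    proof -
      have "(\<lambda>k. (\<Sum>c<n. (B * K) $$ (r',c) * de a k c)) \<longlonglongrightarrow> 0"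
        by (intro tendsto_null_sum tendsto_mult_right_zero delim a) auto
      hence "(\<lambda>k. complex_of_real (\<Sum>c<n. (B * K) $$ (r',c) * de a k c)) \<longlonglongrightarrow> complex_of_real 0"
        by (rule tendsto_of_real)
      thus ?thesis unfolding uue[OF r'] by simp
    qed
    from iss[OF Mc st zzc uuc rec ul r]
    have "(\<lambda>k. complex_of_real (dx a k r)) \<longlonglongrightarrow> complex_of_real 0" unfolding zz_def using r by simp
    thus ?thesis by (simp only: tendsto_of_real_iff)
  qed
  have vn: "vnorm (x i0 k - h i0 - x j0 k + h j0) = sqrt (\<Sum>r<n. (dx i0 k r - dx j0 k r)^2)" for k
  proof -
    have d: "dim_vec (x i0 k - h i0 - x j0 k + h j0) = n" using dimh[OF j0] by simp
    have e: "(x i0 k - h i0 - x j0 k + h j0) $ r = dx i0 k r - dx j0 k r" if "r < n" for r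
      using that dimx[OF i0, of k] dimx[OF j0, of k] dimh[OF i0] dimh[OF j0] unfolding dx_def by simp
    show ?thesis unfolding vnorm_def d using e by simp
  qed
  have "(\<lambda>k. sqrt (\<Sum>r<n. (dx i0 k r - dx j0 k r)^2)) \<longlonglongrightarrow> sqrt (\<Sum>r<n. (0 - 0)^2)"
    by (intro tendsto_real_sqrt tendsto_sum tendsto_power tendsto_diff dxlim i0 j0) auto
  thus "(\<lambda>k. vnorm (x i0 k - h i0 - x j0 k + h j0)) \<longlonglongrightarrow> 0" unfolding vn by simp
qed

end
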